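(* Let $\beta>2$. There is an absolute constant $C<\infty$ such that for every integer $N\ge1$, every $\theta\in[0,\pi)$ and every $K\ge1$ with $$\big|\{s\in\mathbb R: f^*_{N,\theta}(s)\ge K\}\big|\ge K^{-\beta},$$ one has $$\big|\operatorname{proj}_\theta(\mathcal G_{N\lceil K^\beta\rceil})\big|\le \frac{C}{K}.$$
   Context: For $n\ge 0$ and $\alpha\in\{-1,0,1\}^n$ let $z_\alpha=\sum_{k=1}^n 3^{-k}e^{i\pi(\frac12+\frac23\alpha_k)}$ and $\mathcal G_n=\bigcup_{\alpha\in\{-1,0,1\}^n}B(z_\alpha,3^{-n})$, $B(w,r)$ the open disc. $\operatorname{proj}_\theta(w)=\operatorname{Re}(we^{-i\theta})$. The projection multiplicity function is $f_{n,\theta}(s)=\#\{\alpha\in\{-1,0,1\}^n:\ |\operatorname{proj}_\theta(z_\alpha)-s|<3^{-n}\}$, and $f^*_{N,\theta}(s)=\max_{0\le n\le N}f_{n,\theta}(s)$. $|\cdot|$ is Lebesgue measure. *)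

theory Defs
  imports "HOL-Analysis.Analysis"
begin

text \<open>Digit sequences alpha in {-1,0,1}^n, represented as functions nat => int
  supported on {1..n} (value 0 outside), so that the set is finite and
  in bijection with {-1,0,1}^n.\<close>
definition Alph :: "nat \<Rightarrow> (nat \<Rightarrow> int) set" where
  "Alph n = {a. (\<forall>k\<in>{1..n}. a k \<in> {-1,0,1}) \<and> (\<forall>k. k \<notin> {1..n} \<longrightarrow> a k = 0)}"

definition zpt :: "nat \<Rightarrow> (nat \<Rightarrow> int) \<Rightarrow> complex" where
  "zpt n a = (\<Sum>k=1..n. complex_of_real (3 powi (- int k)) *
      exp (\<i> * complex_of_real (pi * (1/2 + 2/3 * real_of_int (a k)))))"

definition Gset :: "nat \<Rightarrow> complex set" where
  "Gset n = (\<Union>a\<in>Alph n. ball (zpt n a) (3 powi (- int n)))"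

definition proj :: "real \<Rightarrow> complex \<Rightarrow> real" where
  "proj \<theta> w = Re (w * exp (- \<i> * complex_of_real \<theta>))"

definition fmult :: "nat \<Rightarrow> real \<Rightarrow> real \<Rightarrow> nat" where
  "fmult n \<theta> s = card {a\<in>Alph n. \<bar>proj \<theta> (zpt n a) - s\<bar> < 3 powi (- int n)}"

definition fstar :: "nat \<Rightarrow> real \<Rightarrow> real \<Rightarrow> nat" where
  "fstar N \<theta> s = Max {fmult n \<theta> s | n. n \<le> N}"

end

theory Submission
  imports Defs
begin


lemma p3: "(3::real) powi (- int k) = 1 / 3^k" by (simp add: power_int_minus divide_inverse)

definition cat :: "nat \<Rightarrow> (nat\<Rightarrow>int) \<Rightarrow> (nat\<Rightarrow>int) \<Rightarrow> nat \<Rightarrow> int" where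
  "cat n b d k = (if k \<le> n then b k else d (k - n))"
definition trunc :: "nat \<Rightarrow> (nat\<Rightarrow>int) \<Rightarrow> nat \<Rightarrow> int" where
  "trunc n g k = (if k \<le> n then g k else 0)"
definition shift :: "nat \<Rightarrow> (nat\<Rightarrow>int) \<Rightarrow> nat \<Rightarrow> int" where
  "shift n g k = (if k = 0 then 0 else g (k + n))"

lemma Alph_0: "a \<in> Alph n \<Longrightarrow> a 0 = 0" by (auto simp: Alph_def)

lemma cat_Alph: "b \<in> Alph n \<Longrightarrow> d \<in> Alph r \<Longrightarrow> cat n b d \<in> Alph (n+r)"
  unfolding Alph_def cat_def
  by (auto simp: not_le)

lemma trunc_Alph: "g \<in> Alph (n+r) \<Longrightarrow> trunc n g \<in> Alph n"
  unfolding Alph_def trunc_def by auto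
lemma shift_Alph: "g \<in> Alph (n+r) \<Longrightarrow> shift n g \<in> Alph r"
  unfolding Alph_def shift_def by auto
lemma cat_trunc_shift: "g \<in> Alph m \<Longrightarrow> cat n (trunc n g) (shift n g) = g"
  unfolding cat_def trunc_def shift_def by (auto simp: fun_eq_iff Alph_0)

lemma cat_inj: assumes "b \<in> Alph n" "b' \<in> Alph n" "d \<in> Alph r" "d' \<in> Alph r"
  "cat n b d = cat n b' d'" shows "b = b' \<and> d = d'"
proof
  show "b = b'"
  proof
    fix k show "b k = b' k"
    proof (cases "k \<le> n")
      case True then show ?thesis using fun_cong[OF assms(5), of k] by (simp add: cat_def)
    next
      case False then show ?thesis using assms(1,2) by (auto simp: Alph_def)
    qed
  qed
  show "d = d'"
  proof
    fix k show "d k = d' k"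
    proof (cases "k = 0")
      case True then show ?thesis using Alph_0[OF assms(3)] Alph_0[OF assms(4)] by simp
    next
      case False then show ?thesis using fun_cong[OF assms(5), of "k+n"] by (simp add: cat_def)
    qed
  qed
qed

lemma Alph_split: "Alph (n+r) = (\<lambda>(b,d). cat n b d) ` (Alph n \<times> Alph r)"
proof
  show "Alph (n+r) \<subseteq> (\<lambda>(b,d). cat n b d) ` (Alph n \<times> Alph r)"
  proof
    fix g assume g: "g \<in> Alph (n+r)"
    then show "g \<in> (\<lambda>(b,d). cat n b d) ` (Alph n \<times> Alph r)"
      using cat_trunc_shift[OF g, of n] trunc_Alph[OF g] shift_Alph[OF g]
      by (metis (no_types, lifting) SigmaI case_prod_conv image_eqI)
  qed
qed (auto intro: cat_Alph)

lemma card_Alph_split: "card (Alph (n+r)) = card (Alph n) * card (Alph r)"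
proof -
  have "inj_on (\<lambda>(b,d). cat n b d) (Alph n \<times> Alph r)"
    by (auto simp: inj_on_def dest: cat_inj)
  then show ?thesis by (simp add: Alph_split card_image card_cartesian_product)
qed

lemma Alph_one: "Alph 1 = (\<lambda>v k. if k = 1 then v else 0) ` {-1,0,1}"
  unfolding Alph_def by (auto simp: fun_eq_iff image_iff) (metis One_nat_def)+

lemma card_Alph_one: "card (Alph 1) = 3"
proof -
  have "inj_on (\<lambda>v::int. \<lambda>k::nat. if k = 1 then v else 0) {-1,0,1}"
    by (auto simp: inj_on_def fun_eq_iff) 
  then have "card ((\<lambda>v::int. \<lambda>k::nat. if k = 1 then v else 0) ` {-1,0,1}) = 3"
    by (subst card_image) auto
  then show ?thesis by (simp only: Alph_one)
qed

lemma Alph_zero: "Alph 0 = {\<lambda>_. 0}" unfolding Alph_def by auto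

lemma card_Alph: "card (Alph n) = 3^n"
proof (induction n)
  case 0 then show ?case by (simp add: Alph_zero)
next
  case (Suc n) then show ?case using card_Alph_split[of n 1] card_Alph_one by simp
qed

lemma finite_Alph: "finite (Alph n)" using card_Alph[of n] card.infinite by fastforce
lemma Alph_ne: "Alph n \<noteq> {}" using card_Alph[of n] by auto



lemma zpt_alt: "zpt n a = (\<Sum>k=1..n. complex_of_real (1/3^k) *
      exp (\<i> * complex_of_real (pi * (1/2 + 2/3 * real_of_int (a k)))))"
  unfolding zpt_def p3 by simp

lemma zpt_cat: assumes "b \<in> Alph n" "d \<in> Alph r"
  shows "zpt (n+r) (cat n b d) = zpt n b + complex_of_real (1/3^n) * zpt r d"
proof -
  define f where "f = (\<lambda>a k. complex_of_real (1/3^k) *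
      exp (\<i> * complex_of_real (pi * (1/2 + 2/3 * real_of_int (a k)))))"
  have "zpt (n+r) (cat n b d) = (\<Sum>k=1..n+r. f (cat n b d) k)" unfolding zpt_alt f_def ..
  also have "\<dots> = (\<Sum>k=1..n. f (cat n b d) k) + (\<Sum>k=n+1..n+r. f (cat n b d) k)"
    by (rule sum.ub_add_nat) simp
  also have "(\<Sum>k=1..n. f (cat n b d) k) = (\<Sum>k=1..n. f b k)"
    by (rule sum.cong) (auto simp: f_def cat_def)
  also have "(\<Sum>k=n+1..n+r. f (cat n b d) k) = (\<Sum>j=1..r. f (cat n b d) (j+n))"
    using sum.shift_bounds_cl_nat_ivl[of "f (cat n b d)" 1 n r] by (simp add: add.commute)
  also have "\<dots> = (\<Sum>j=1..r. complex_of_real (1/3^n) * f d j)"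
    by (rule sum.cong) (auto simp: f_def cat_def power_add)
  also have "\<dots> = complex_of_real (1/3^n) * zpt r d"
    unfolding zpt_alt f_def by (simp add: sum_distrib_left)
  finally show ?thesis unfolding zpt_alt f_def by simp
qed

lemma geom3: "(\<Sum>k=1..n. (1::real)/3^k) = (1 - 1/3^n)/2"
proof (induction n)
  case (Suc n)
  have "(\<Sum>k=1..Suc n. (1::real)/3^k) = (\<Sum>k=1..n. 1/3^k) + 1/3^(Suc n)" by simp
  also have "\<dots> = (1-1/3^n)/2 + 1/3^(Suc n)" by (simp only: Suc.IH)
  also have "\<dots> = (1 - 1/3^Suc n)/2" by (simp add: field_simps)
  finally show ?case .
qed simp

lemma norm_term: "cmod (complex_of_real c * exp (\<i> * complex_of_real x)) = \<bar>c\<bar>"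
  by (simp only: norm_mult norm_of_real norm_exp_i_times)

lemma zpt_bound: "cmod (zpt n a) \<le> (1 - 1/3^n)/2"
proof -
  have "cmod (zpt n a) \<le> (\<Sum>k=1..n. cmod (complex_of_real (1/3^k) *
      exp (\<i> * complex_of_real (pi * (1/2 + 2/3 * real_of_int (a k))))))"
    unfolding zpt_alt by (rule norm_sum)
  also have "\<dots> = (\<Sum>k=1..n. (1::real)/3^k)"
    by (rule sum.cong) (simp_all only: norm_term, simp)
  finally show ?thesis using geom3[of n] by linarith
qed

lemma norm_e: "cmod (exp (- \<i> * complex_of_real \<theta>)) = 1"
proof -
  have "- \<i> * complex_of_real \<theta> = \<i> * complex_of_real (-\<theta>)" by simp
  then show ?thesis by (simp only: norm_exp_i_times)
qed

lemma proj_add: "proj \<theta> (z + complex_of_real c * w) = proj \<theta> z + c * proj \<theta> w"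
  unfolding proj_def by (simp add: distrib_right mult.assoc)

lemma proj_diff: "proj \<theta> (z - w) = proj \<theta> z - proj \<theta> w"
  unfolding proj_def by (simp add: left_diff_distrib)

lemma proj_le: "\<bar>proj \<theta> w\<bar> \<le> cmod w"
proof -
  have "\<bar>proj \<theta> w\<bar> \<le> cmod (w * exp (- \<i> * complex_of_real \<theta>))"
    unfolding proj_def by (rule abs_Re_le_cmod)
  also have "\<dots> = cmod w" by (simp add: norm_mult norm_e)
  finally show ?thesis .
qed

lemma proj_e: "proj \<theta> (z + complex_of_real t * exp (\<i> * complex_of_real \<theta>)) = proj \<theta> z + t"
proof -
  have "exp (\<i> * complex_of_real \<theta>) * exp (- \<i> * complex_of_real \<theta>) = 1"
    by (simp add: exp_add[symmetric])
  then show ?thesis unfolding proj_def by (simp add: distrib_right mult.assoc)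
qed

lemma proj_ball: "proj \<theta> ` ball z \<rho> = ball (proj \<theta> z) \<rho>"
proof
  show "proj \<theta> ` ball z \<rho> \<subseteq> ball (proj \<theta> z) \<rho>"
  proof
    fix t assume "t \<in> proj \<theta> ` ball z \<rho>"
    then obtain w where w: "w \<in> ball z \<rho>" "t = proj \<theta> w" by auto
    have "\<bar>proj \<theta> z - proj \<theta> w\<bar> \<le> cmod (z - w)" using proj_le[of \<theta> "z-w"] by (simp add: proj_diff)
    then show "t \<in> ball (proj \<theta> z) \<rho>" using w by (simp add: dist_norm dist_real_def)
  qed
  show "ball (proj \<theta> z) \<rho> \<subseteq> proj \<theta> ` ball z \<rho>"
  proof
    fix t assume t: "t \<in> ball (proj \<theta> z) \<rho>"
    define w where "w = z + complex_of_real (t - proj \<theta> z) * exp (\<i> * complex_of_real \<theta>)"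
    have "proj \<theta> w = t" unfolding w_def proj_e by simp
    moreover have "cmod (z - w) = \<bar>t - proj \<theta> z\<bar>" unfolding w_def by (simp add: norm_mult del: of_real_diff)
    moreover have "w \<in> ball z \<rho>" using t \<open>cmod (z - w) = \<bar>t - proj \<theta> z\<bar>\<close>
      by (simp add: dist_norm dist_real_def abs_minus_commute)
    ultimately show "t \<in> proj \<theta> ` ball z \<rho>" by (metis image_eqI)
  qed
qed

definition pp :: "real \<Rightarrow> nat \<Rightarrow> (nat\<Rightarrow>int) \<Rightarrow> real" where
  "pp \<theta> n a = proj \<theta> (zpt n a)"

lemma pp_cat: "b \<in> Alph n \<Longrightarrow> d \<in> Alph r \<Longrightarrow> pp \<theta> (n+r) (cat n b d) = pp \<theta> n b + (1/3^n) * pp \<theta> r d"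
  unfolding pp_def by (simp add: zpt_cat proj_add del: of_real_divide)

lemma pp_bound: "\<bar>pp \<theta> n a\<bar> \<le> (1 - 1/3^n)/2"
  unfolding pp_def using proj_le zpt_bound order_trans by blast

lemma P_eq: "proj \<theta> ` Gset r = (\<Union>a\<in>Alph r. ball (pp \<theta> r a) (1/3^r))"
  unfolding Gset_def image_UN p3 proj_ball pp_def ..

lemma fmult_eq: "fmult n \<theta> s = card {a\<in>Alph n. \<bar>pp \<theta> n a - s\<bar> < 1/3^n}"
  unfolding fmult_def pp_def p3 ..



definition Pr :: "real \<Rightarrow> nat \<Rightarrow> real set" where
  "Pr \<theta> r = (\<Union>a\<in>Alph r. ball (pp \<theta> r a) (1/3^r))"

definition Acp :: "real \<Rightarrow> nat \<Rightarrow> nat \<Rightarrow> (nat\<Rightarrow>int) \<Rightarrow> real set" where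
  "Acp \<theta> N r g = (\<lambda>x. pp \<theta> N g + (1/3^N) *\<^sub>R x) ` Pr \<theta> r"

lemma Pr_sub: "Pr \<theta> r \<subseteq> ball 0 1"
proof
  fix t assume "t \<in> Pr \<theta> r"
  then obtain a where "\<bar>t - pp \<theta> r a\<bar> < 1/3^r" unfolding Pr_def by (auto simp: dist_real_def abs_minus_commute)
  moreover have "\<bar>pp \<theta> r a\<bar> \<le> (1 - 1/3^r)/2" by (rule pp_bound)
  moreover have "(1::real)/3^r \<le> 1" by simp
  ultimately show "t \<in> ball 0 1" by (simp add: dist_real_def)
qed

lemma Pr_open: "open (Pr \<theta> r)" unfolding Pr_def by auto
lemma Pr_bounded: "bounded (Pr \<theta> r)" using Pr_sub bounded_ball bounded_subset by blast
lemma Pr_lmeas: "Pr \<theta> r \<in> lmeasurable" using Pr_open Pr_bounded lmeasurable_open by blast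
lemma Pr_ne: "Pr \<theta> r \<noteq> {}"
proof -
  obtain a where "a \<in> Alph r" using Alph_ne by blast
  moreover have "pp \<theta> r a \<in> ball (pp \<theta> r a) (1/3^r)" by simp
  ultimately show ?thesis unfolding Pr_def by blast
qed

lemma Pr_le2: "measure lebesgue (Pr \<theta> r) \<le> 2"
proof -
  have "measure lebesgue (Pr \<theta> r) \<le> measure lebesgue (ball (0::real) 1)"
    by (rule measure_mono_fmeasurable[OF Pr_sub]) (use Pr_lmeas in auto)
  then show ?thesis by (simp add: ball_eq_greaterThanLessThan)
qed

lemma Acp_open: "open (Acp \<theta> N r g)" unfolding Acp_def by (rule open_affinity) (auto simp: Pr_open)
lemma Acp_bounded: "bounded (Acp \<theta> N r g)"
proof -
  have "bounded ((\<lambda>x. pp \<theta> N g + x) ` ((\<lambda>x. (1/3^N) *\<^sub>R x) ` Pr \<theta> r))"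
    by (intro bounded_translation bounded_scaling Pr_bounded)
  then show ?thesis unfolding Acp_def image_image .
qed
lemma Acp_lmeas: "Acp \<theta> N r g \<in> lmeasurable" using Acp_open Acp_bounded lmeasurable_open by blast
lemma Acp_ne: "Acp \<theta> N r g \<noteq> {}" unfolding Acp_def using Pr_ne by auto

lemma Acp_measure: "measure lebesgue (Acp \<theta> N r g) = (1/3^N) * measure lebesgue (Pr \<theta> r)"
proof -
  have "Acp \<theta> N r g = (\<lambda>x. (1/3^N) *\<^sub>R x + pp \<theta> N g) ` Pr \<theta> r"
    unfolding Acp_def by (simp add: add.commute)
  then show ?thesis using measure_lebesgue_affine[of "1/3^N" "pp \<theta> N g" "Pr \<theta> r"] by simp
qed

lemma Pr_decomp: "Pr \<theta> (N + r) \<subseteq> (\<Union>g\<in>Alph N. Acp \<theta> N r g)"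
proof
  fix t assume "t \<in> Pr \<theta> (N + r)"
  then obtain a where a: "a \<in> Alph (N+r)" "\<bar>t - pp \<theta> (N+r) a\<bar> < 1/3^(N+r)"
    unfolding Pr_def by (auto simp: dist_real_def abs_minus_commute)
  obtain g d where gd: "g \<in> Alph N" "d \<in> Alph r" "a = cat N g d" using a(1) unfolding Alph_split[of N r] by auto
  have pa: "pp \<theta> (N+r) a = pp \<theta> N g + (1/3^N) * pp \<theta> r d" using pp_cat gd by blast
  define x where "x = 3^N * (t - pp \<theta> N g)"
  have "\<bar>x - pp \<theta> r d\<bar> = 3^N * \<bar>t - pp \<theta> (N+r) a\<bar>" unfolding x_def pa
    by (simp add: field_simps abs_mult)
  also have "\<dots> < 3^N * (1/3^(N+r))" using a(2) by (intro mult_strict_left_mono) auto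
  also have "\<dots> = 1/3^r" by (simp add: power_add)
  finally have "x \<in> Pr \<theta> r" unfolding Pr_def using gd(2) by (auto simp: dist_real_def abs_minus_commute)
  moreover have "t = pp \<theta> N g + (1/3^N) *\<^sub>R x" unfolding x_def by simp
  ultimately show "t \<in> (\<Union>g\<in>Alph N. Acp \<theta> N r g)" unfolding Acp_def using gd(1) by blast
qed

lemma Acp_sub: assumes "n \<le> N" "b \<in> Alph n" "d \<in> Alph (N-n)"
  shows "Acp \<theta> N r (cat n b d) \<subseteq> ball (pp \<theta> n b) (1/3^n)"
proof
  fix t assume "t \<in> Acp \<theta> N r (cat n b d)"
  then obtain x where x: "x \<in> Pr \<theta> r" "t = pp \<theta> N (cat n b d) + (1/3^N) * x" unfolding Acp_def by auto
  have NN: "N = n + (N-n)" using assms by simp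
  have "pp \<theta> N (cat n b d) = pp \<theta> n b + (1/3^n) * pp \<theta> (N-n) d"
    using pp_cat[OF assms(2,3), of \<theta>] NN by simp
  then have tt: "t - pp \<theta> n b = (1/3^n) * pp \<theta> (N-n) d + (1/3^N) * x" using x by simp
  have "x \<in> ball 0 1" using x(1) Pr_sub by blast
  then have xb: "\<bar>x\<bar> < 1" by simp
  have db: "\<bar>pp \<theta> (N-n) d\<bar> \<le> (1 - 1/3^(N-n))/2" by (rule pp_bound)
  have p3N: "(3::real)^N = 3^n * 3^(N-n)" by (subst NN) (simp add: power_add)
  have "\<bar>t - pp \<theta> n b\<bar> \<le> (1/3^n) * \<bar>pp \<theta> (N-n) d\<bar> + (1/3^N) * \<bar>x\<bar>"
    unfolding tt by (rule order_trans[OF abs_triangle_ineq]) (simp add: abs_mult)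
  also have "\<dots> < (1/3^n) * ((1 - 1/3^(N-n))/2) + (1/3^N)"
  proof -
    have "(1/3^n) * \<bar>pp \<theta> (N-n) d\<bar> \<le> (1/3^n) * ((1 - 1/3^(N-n))/2)"
      using db by (intro mult_left_mono) auto
    moreover have "(1/3^N) * \<bar>x\<bar> < 1/3^N" using xb by (simp add: divide_strict_right_mono)
    ultimately show ?thesis by linarith
  qed
  also have "\<dots> \<le> 1/3^n" unfolding p3N by (simp add: field_simps)
  finally show "t \<in> ball (pp \<theta> n b) (1/3^n)" by (simp add: dist_real_def abs_minus_commute)
qed



lemma vitali_fin:
  fixes c :: "'i \<Rightarrow> real" and \<rho> :: "'i \<Rightarrow> real"
  assumes "finite I" "\<forall>i\<in>I. \<rho> i > 0"
  shows "\<exists>I'\<subseteq>I. (\<forall>i\<in>I'. \<forall>j\<in>I'. i \<noteq> j \<longrightarrow> ball (c i) (\<rho> i) \<inter> ball (c j) (\<rho> j) = {}) \<and>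
     (\<Union>i\<in>I. ball (c i) (\<rho> i)) \<subseteq> (\<Union>i\<in>I'. ball (c i) (3 * \<rho> i))"
  using assms
proof (induction I rule: finite_psubset_induct)
  case (psubset I)
  show ?case
  proof (cases "I = {}")
    case True then show ?thesis by auto
  next
    case False
    have "Max (\<rho> ` I) \<in> \<rho> ` I" using False psubset.hyps by auto
    then obtain i0 where i0: "i0 \<in> I" "\<rho> i0 = Max (\<rho> ` I)" by auto
    have i0max: "\<rho> i \<le> \<rho> i0" if "i \<in> I" for i using that i0(2) psubset.hyps by simp
    define I1 where "I1 = {i\<in>I. ball (c i) (\<rho> i) \<inter> ball (c i0) (\<rho> i0) = {}}"
    have "c i0 \<in> ball (c i0) (\<rho> i0)" using psubset.prems i0(1) by auto
    then have "i0 \<notin> I1" unfolding I1_def by auto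
    moreover have "I1 \<subseteq> I" unfolding I1_def by auto
    ultimately have "I1 \<subset> I" using i0(1) by blast
    then obtain I1' where I1': "I1' \<subseteq> I1"
      "\<forall>i\<in>I1'. \<forall>j\<in>I1'. i \<noteq> j \<longrightarrow> ball (c i) (\<rho> i) \<inter> ball (c j) (\<rho> j) = {}"
      "(\<Union>i\<in>I1. ball (c i) (\<rho> i)) \<subseteq> (\<Union>i\<in>I1'. ball (c i) (3 * \<rho> i))"
      using psubset.IH[of I1] psubset.prems by blast
    define I' where "I' = insert i0 I1'"
    have "I' \<subseteq> I" using I1'(1) i0(1) unfolding I'_def I1_def by auto
    moreover have "\<forall>i\<in>I'. \<forall>j\<in>I'. i \<noteq> j \<longrightarrow> ball (c i) (\<rho> i) \<inter> ball (c j) (\<rho> j) = {}"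
      using I1'(1,2) unfolding I'_def I1_def by blast
    moreover have "(\<Union>i\<in>I. ball (c i) (\<rho> i)) \<subseteq> (\<Union>i\<in>I'. ball (c i) (3 * \<rho> i))"
    proof
      fix y assume "y \<in> (\<Union>i\<in>I. ball (c i) (\<rho> i))"
      then obtain i where i: "i \<in> I" "y \<in> ball (c i) (\<rho> i)" by auto
      show "y \<in> (\<Union>i\<in>I'. ball (c i) (3 * \<rho> i))"
      proof (cases "i \<in> I1")
        case True then show ?thesis using I1'(3) i unfolding I'_def by blast
      next
        case False
        then obtain z where z: "z \<in> ball (c i) (\<rho> i)" "z \<in> ball (c i0) (\<rho> i0)"
          using i(1) unfolding I1_def by auto
        have "dist y (c i0) \<le> dist y (c i) + dist (c i) z + dist z (c i0)"
          by (metis dist_triangle add.commute order_trans add_left_mono dist_commute)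
        also have "\<dots> < 3 * \<rho> i0" using i(2) z i0max[OF i(1)]
          by (simp add: dist_commute)
        finally have "y \<in> ball (c i0) (3 * \<rho> i0)" by (simp add: dist_commute)
        then show ?thesis unfolding I'_def by blast
      qed
    qed
    ultimately show ?thesis by blast
  qed
qed



definition Fam :: "real \<Rightarrow> nat \<Rightarrow> real \<Rightarrow> (nat \<times> (nat\<Rightarrow>int) set) set" where
  "Fam \<theta> N K = {(n,S). n \<le> N \<and> S \<subseteq> Alph n \<and> K \<le> real (card S) \<and>
      (\<exists>c. \<forall>b\<in>S. \<bar>pp \<theta> n b - c\<bar> < 1/3^n)}"

definition cen :: "real \<Rightarrow> nat \<times> (nat\<Rightarrow>int) set \<Rightarrow> real" where
  "cen \<theta> i = (SOME c. \<forall>b\<in>snd i. \<bar>pp \<theta> (fst i) b - c\<bar> < 1/3^(fst i))"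

lemma cen_prop: "i \<in> Fam \<theta> N K \<Longrightarrow> b \<in> snd i \<Longrightarrow> \<bar>pp \<theta> (fst i) b - cen \<theta> i\<bar> < 1/3^(fst i)"
proof -
  assume i: "i \<in> Fam \<theta> N K" and b: "b \<in> snd i"
  have "\<exists>c. \<forall>b\<in>snd i. \<bar>pp \<theta> (fst i) b - c\<bar> < 1/3^(fst i)" using i unfolding Fam_def by (auto, blast)
  then have "\<forall>b\<in>snd i. \<bar>pp \<theta> (fst i) b - cen \<theta> i\<bar> < 1/3^(fst i)" unfolding cen_def by (rule someI_ex)
  then show ?thesis using b by blast
qed

lemma Fam_finite: "finite (Fam \<theta> N K)"
proof -
  have "Fam \<theta> N K \<subseteq> (SIGMA n:{..N}. Pow (Alph n))" unfolding Fam_def by auto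
  moreover have "finite (SIGMA n:{..N}. Pow (Alph n))" by (intro finite_SigmaI) (auto simp: finite_Alph)
  ultimately show ?thesis by (rule finite_subset)
qed

lemma E_cover: assumes "K \<ge> 1"
  shows "{s. K \<le> real (fstar N \<theta> s)} \<subseteq> (\<Union>i\<in>Fam \<theta> N K. ball (cen \<theta> i) (2/3^(fst i)))"
proof
  fix s assume "s \<in> {s. K \<le> real (fstar N \<theta> s)}"
  then have Ks: "K \<le> real (fstar N \<theta> s)" by simp
  have eq: "{fmult n \<theta> s | n. n \<le> N} = (\<lambda>n. fmult n \<theta> s) ` {..N}" by auto
  have "fstar N \<theta> s \<in> (\<lambda>n. fmult n \<theta> s) ` {..N}"
    unfolding fstar_def eq by (rule Max_in) auto
  then obtain n where n: "n \<le> N" "fstar N \<theta> s = fmult n \<theta> s" by auto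
  define S where "S = {a\<in>Alph n. \<bar>pp \<theta> n a - s\<bar> < 1/3^n}"
  have cS: "K \<le> real (card S)" using Ks n(2) unfolding S_def fmult_eq by simp
  have i: "(n,S) \<in> Fam \<theta> N K" unfolding Fam_def using n(1) cS by (auto simp: S_def)
  have "card S > 0" using cS assms by linarith
  then obtain b where b: "b \<in> S" by (metis card_gt_0_iff equals0I)
  have "\<bar>pp \<theta> n b - cen \<theta> (n,S)\<bar> < 1/3^n" using cen_prop[OF i, of b] b by simp
  moreover have "\<bar>pp \<theta> n b - s\<bar> < 1/3^n" using b unfolding S_def by simp
  ultimately have "s \<in> ball (cen \<theta> (n,S)) (2/3^n)" by (simp add: dist_real_def)
  then show "s \<in> (\<Union>i\<in>Fam \<theta> N K. ball (cen \<theta> i) (2/3^(fst i)))" using i by force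
qed

definition Gr :: "nat \<Rightarrow> nat \<times> (nat\<Rightarrow>int) set \<Rightarrow> (nat\<Rightarrow>int) set" where
  "Gr N i = (\<lambda>(b,d). cat (fst i) b d) ` (snd i \<times> Alph (N - fst i))"

lemma Gr_sub: "i \<in> Fam \<theta> N K \<Longrightarrow> Gr N i \<subseteq> Alph N"
  unfolding Gr_def Fam_def using cat_Alph[of _ "fst i" _ "N - fst i"] by fastforce

lemma Gr_card: assumes "i \<in> Fam \<theta> N K" shows "card (Gr N i) = card (snd i) * 3^(N - fst i)"
proof -
  have SA: "snd i \<subseteq> Alph (fst i)" using assms unfolding Fam_def by auto
  have "inj_on (\<lambda>(b,d). cat (fst i) b d) (snd i \<times> Alph (N - fst i))"
  proof (rule inj_onI, clarify)
    fix b d b' d' assume "b \<in> snd i" "d \<in> Alph (N - fst i)" "b' \<in> snd i" "d' \<in> Alph (N - fst i)"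
      "cat (fst i) b d = cat (fst i) b' d'"
    then show "b = b' \<and> d = d'" using cat_inj[of b "fst i" b' d "N - fst i" d'] SA by blast
  qed
  then show ?thesis unfolding Gr_def by (simp add: card_image card_cartesian_product card_Alph)
qed

lemma Gr_Acp: assumes "i \<in> Fam \<theta> N K" "g \<in> Gr N i"
  shows "Acp \<theta> N r g \<subseteq> ball (cen \<theta> i) (2/3^(fst i))"
proof
  obtain n S where nS: "i = (n,S)" by fastforce
  have nN: "n \<le> N" and SA: "S \<subseteq> Alph n" using assms(1) nS unfolding Fam_def by auto
  obtain b d where bd: "b \<in> S" "d \<in> Alph (N-n)" "g = cat n b d" using assms(2) nS unfolding Gr_def by auto
  fix t assume "t \<in> Acp \<theta> N r g"
  then have "t \<in> ball (pp \<theta> n b) (1/3^n)" using Acp_sub[OF nN _ bd(2)] bd SA by blast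
  moreover have "\<bar>pp \<theta> n b - cen \<theta> i\<bar> < 1/3^n" using cen_prop[OF assms(1), of b] bd nS by simp
  ultimately show "t \<in> ball (cen \<theta> i) (2/3^(fst i))" using nS by (simp add: dist_real_def)
qed



lemma ball_meas: "r > 0 \<Longrightarrow> measure lebesgue (ball (c::real) r) = 2*r"
  by (simp add: ball_eq_greaterThanLessThan)

lemma block:
  assumes F'sub: "F' \<subseteq> Fam \<theta> N K"
    and disj: "\<forall>i\<in>F'. \<forall>j\<in>F'. i \<noteq> j \<longrightarrow> ball (cen \<theta> i) (2/3^(fst i)) \<inter> ball (cen \<theta> j) (2/3^(fst j)) = {}"
  shows "measure lebesgue (Pr \<theta> (N+r)) \<le> measure lebesgue (Pr \<theta> r)
          - (K * measure lebesgue (Pr \<theta> r) - 4) * (\<Sum>i\<in>F'. 1/3^(fst i))"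
proof -
  define L where "L = measure lebesgue (Pr \<theta> r)"
  define \<sigma> where "\<sigma> = (\<Sum>i\<in>F'. (1::real)/3^(fst i))"
  have L0: "L \<ge> 0" unfolding L_def by simp
  have finF: "finite F'" using F'sub Fam_finite finite_subset by blast
  have Gdisj: "Gr N i \<inter> Gr N j = {}" if "i \<in> F'" "j \<in> F'" "i \<noteq> j" for i j
  proof (rule ccontr)
    assume "Gr N i \<inter> Gr N j \<noteq> {}"
    then obtain g where g: "g \<in> Gr N i" "g \<in> Gr N j" by blast
    obtain t where t: "t \<in> Acp \<theta> N r g" using Acp_ne by blast
    have "t \<in> ball (cen \<theta> i) (2/3^(fst i))" using Gr_Acp[of i \<theta> N K g r] g t that F'sub by blast
    moreover have "t \<in> ball (cen \<theta> j) (2/3^(fst j))" using Gr_Acp[of j \<theta> N K g r] g t that F'sub by blast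
    ultimately show False using disj that by blast
  qed
  define U where "U = (\<Union>i\<in>F'. Gr N i)"
  define R where "R = Alph N - U"
  have UA: "U \<subseteq> Alph N" unfolding U_def using Gr_sub F'sub by blast
  have finU: "finite U" using UA finite_Alph finite_subset by blast
  have finR: "finite R" unfolding R_def using finite_Alph by simp
  define B1 where "B1 = (\<Union>i\<in>F'. ball (cen \<theta> i) (2/3^(fst i)))"
  define B2 where "B2 = (\<Union>g\<in>R. Acp \<theta> N r g)"
  have cover: "Pr \<theta> (N+r) \<subseteq> B1 \<union> B2"
  proof
    fix t assume "t \<in> Pr \<theta> (N+r)"
    then obtain g where g: "g \<in> Alph N" "t \<in> Acp \<theta> N r g" using Pr_decomp by blast
    show "t \<in> B1 \<union> B2"
    proof (cases "g \<in> U")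
      case True
      then obtain i where "i \<in> F'" "g \<in> Gr N i" unfolding U_def by blast
      then have "t \<in> ball (cen \<theta> i) (2/3^(fst i))" using Gr_Acp[of i \<theta> N K g r] g F'sub by blast
      then show ?thesis unfolding B1_def using \<open>i \<in> F'\<close> by blast
    next
      case False then show ?thesis unfolding B2_def R_def using g by blast
    qed
  qed
  have B1m: "B1 \<in> fmeasurable lebesgue" unfolding B1_def using finF
    by (intro fmeasurable.finite_UN) auto
  have B2m: "B2 \<in> fmeasurable lebesgue" unfolding B2_def using finR
    by (intro fmeasurable.finite_UN) (auto simp: Acp_lmeas)
  have "measure lebesgue (Pr \<theta> (N+r)) \<le> measure lebesgue (B1 \<union> B2)"
    by (rule measure_mono_fmeasurable[OF cover]) (use Pr_lmeas B1m B2m in auto)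
  also have "\<dots> \<le> measure lebesgue B1 + measure lebesgue B2"
    by (rule measure_Un_le) (use B1m B2m in auto)
  also have "measure lebesgue B1 \<le> (\<Sum>i\<in>F'. measure lebesgue (ball (cen \<theta> i) (2/3^(fst i))))"
    unfolding B1_def by (rule measure_UNION_le[OF finF]) auto
  also have "\<dots> = 4 * \<sigma>" unfolding \<sigma>_def sum_distrib_left
  proof (rule sum.cong)
    fix i show "measure lebesgue (ball (cen \<theta> i) (2/3^(fst i))) = 4 * (1/3^fst i)"
      using ball_meas[of "2/3^fst i" "cen \<theta> i"] by simp
  qed simp
  also have "measure lebesgue B2 \<le> (\<Sum>g\<in>R. measure lebesgue (Acp \<theta> N r g))"
    unfolding B2_def by (rule measure_UNION_le[OF finR]) (use Acp_lmeas fmeasurableD in blast)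
  also have "\<dots> = real (card R) * (L / 3^N)" by (simp add: Acp_measure L_def)
  also have "real (card R) * (L / 3^N) \<le> (1 - K * \<sigma>) * L"
  proof -
    have cU: "card U = (\<Sum>i\<in>F'. card (Gr N i))" unfolding U_def
    proof (rule card_UN_disjoint[OF finF])
      show "\<forall>i\<in>F'. finite (Gr N i)"
        using F'sub by (auto intro: finite_subset[OF Gr_sub finite_Alph])
      show "\<forall>i\<in>F'. \<forall>j\<in>F'. i \<noteq> j \<longrightarrow> Gr N i \<inter> Gr N j = {}" using Gdisj by blast
    qed
    have s1: "real (card R) = 3^N - real (card U)"
      unfolding R_def using card_Diff_subset[OF finU UA] card_mono[OF finite_Alph UA] by (simp add: card_Alph of_nat_diff)
    have s2: "real (card U) = (\<Sum>i\<in>F'. real (card (snd i)) * 3^(N - fst i))"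
      unfolding cU of_nat_sum by (rule sum.cong) (auto simp: Gr_card dest: subsetD[OF F'sub])
    have s3: "(\<Sum>i\<in>F'. K * 3^(N - fst i)) \<le> (\<Sum>i\<in>F'. real (card (snd i)) * 3^(N - fst i))"
      by (rule sum_mono) (use F'sub in \<open>auto simp: Fam_def intro!: mult_right_mono\<close>)
    have "real (card R) \<le> 3^N - (\<Sum>i\<in>F'. K * 3^(N - fst i))" using s1 s2 s3 by linarith
    also have "(\<Sum>i\<in>F'. K * 3^(N - fst i)) = 3^N * (K * \<sigma>)"
      unfolding \<sigma>_def sum_distrib_left
    proof (rule sum.cong)
      fix i assume "i \<in> F'"
      then have "fst i \<le> N" using F'sub unfolding Fam_def by auto
      then have "(3::real)^N = 3^fst i * 3^(N - fst i)" by (metis le_add_diff_inverse power_add)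
      then show "K * 3^(N - fst i) = 3^N * (K * (1/3^fst i))" by simp
    qed simp
    finally have "real (card R) / 3^N \<le> 1 - K * \<sigma>" by (simp add: field_simps)
    then show ?thesis using L0 mult_right_mono by fastforce
  qed
  finally show ?thesis unfolding L_def[symmetric] \<sigma>_def[symmetric] by (simp add: algebra_simps)
qed



lemma main_bound:
  fixes N :: nat and \<theta> K \<beta> :: real
  assumes K1: "K \<ge> 1"
    and hyp: "measure lebesgue {s::real. real (fstar N \<theta> s) \<ge> K} \<ge> K powr (- \<beta>)"
  shows "measure lebesgue (Pr \<theta> (N * nat \<lceil>K powr \<beta>\<rceil>)) \<le> 48 / K"
proof -
  define E where "E = {s::real. K \<le> real (fstar N \<theta> s)}"
  have Kpos: "K > 0" using K1 by simp
  have "K powr (- \<beta>) > 0" using Kpos by simp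
  then have epos: "measure lebesgue E > 0" using hyp unfolding E_def by linarith
  have Esets: "E \<in> sets lebesgue" using epos measure_notin_sets by fastforce
  define \<rho> where "\<rho> = (\<lambda>i::nat \<times> (nat\<Rightarrow>int) set. (2::real)/3^(fst i))"
  obtain F' where F': "F' \<subseteq> Fam \<theta> N K"
    "\<forall>i\<in>F'. \<forall>j\<in>F'. i \<noteq> j \<longrightarrow> ball (cen \<theta> i) (\<rho> i) \<inter> ball (cen \<theta> j) (\<rho> j) = {}"
    "(\<Union>i\<in>Fam \<theta> N K. ball (cen \<theta> i) (\<rho> i)) \<subseteq> (\<Union>i\<in>F'. ball (cen \<theta> i) (3 * \<rho> i))"
    using vitali_fin[OF Fam_finite, where c = "cen \<theta>" and \<rho> = \<rho> and \<theta>1 = \<theta> and N1 = N and K1 = K] unfolding \<rho>_def by auto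
  have finF: "finite F'" using F'(1) Fam_finite finite_subset by blast
  define \<sigma> where "\<sigma> = (\<Sum>i\<in>F'. (1::real)/3^(fst i))"
  have \<sigma>0: "\<sigma> \<ge> 0" unfolding \<sigma>_def by (intro sum_nonneg) auto
  have Esub: "E \<subseteq> (\<Union>i\<in>F'. ball (cen \<theta> i) (3 * \<rho> i))"
    using E_cover[OF K1, of N \<theta>] F'(3) unfolding E_def \<rho>_def by blast
  have Um: "(\<Union>i\<in>F'. ball (cen \<theta> i) (3 * \<rho> i)) \<in> fmeasurable lebesgue"
    using finF by (intro fmeasurable.finite_UN) auto
  have "measure lebesgue E \<le> measure lebesgue (\<Union>i\<in>F'. ball (cen \<theta> i) (3 * \<rho> i))"
    by (rule measure_mono_fmeasurable[OF Esub Esets Um])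
  also have "\<dots> \<le> (\<Sum>i\<in>F'. measure lebesgue (ball (cen \<theta> i) (3 * \<rho> i)))"
    by (rule measure_UNION_le[OF finF]) auto
  also have "\<dots> = 12 * \<sigma>" unfolding \<sigma>_def sum_distrib_left
  proof (rule sum.cong)
    fix i show "measure lebesgue (ball (cen \<theta> i) (3 * \<rho> i)) = 12 * (1/3^fst i)"
      using ball_meas[of "3 * \<rho> i" "cen \<theta> i"] unfolding \<rho>_def by simp
  qed simp
  finally have e\<sigma>: "measure lebesgue E \<le> 12 * \<sigma>" .
  define x where "x = (\<lambda>j. measure lebesgue (Pr \<theta> (N * j)))"
  have blk: "x (Suc j) \<le> x j - (K * x j - 4) * \<sigma>" for j
  proof -
    have d: "\<forall>i\<in>F'. \<forall>j\<in>F'. i \<noteq> j \<longrightarrow> ball (cen \<theta> i) (2/3^(fst i)) \<inter> ball (cen \<theta> j) (2/3^(fst j)) = {}"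
      using F'(2) unfolding \<rho>_def .
    show ?thesis using block[OF F'(1) d, of "N*j"] unfolding x_def \<sigma>_def by (simp add: mult_Suc_right)
  qed
  have mono: "x (Suc j) \<le> x j" for j
    using block[of "{}" \<theta> N K "N*j"] unfolding x_def by (simp add: mult_Suc_right)
  have monoj: "x m \<le> x j" if "j \<le> m" for j m
    using that
  proof (induction m)
    case (Suc m) then show ?case using mono[of m] by (cases "j = Suc m") auto
  qed simp
  define m where "m = nat \<lceil>K powr \<beta>\<rceil>"
  have mge: "real m \<ge> K powr \<beta>"
  proof -
    have c1: "K powr \<beta> \<le> real_of_int \<lceil>K powr \<beta>\<rceil>" by (rule le_of_int_ceiling)
    have p: "0 < K powr \<beta>" using Kpos by simp
    have "0 \<le> \<lceil>K powr \<beta>\<rceil>" using p by (simp; linarith)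
    then have "real m = real_of_int \<lceil>K powr \<beta>\<rceil>" unfolding m_def by simp
    then show ?thesis using c1 by simp
  qed
  have x0: "x 0 \<le> 2" unfolding x_def using Pr_le2 by simp
  have xm0: "x m \<ge> 0" unfolding x_def by simp
  have "K * x m \<le> 48"
  proof (rule ccontr)
    assume "\<not> K * x m \<le> 48"
    then have big: "K * x m > 48" by simp
    have step: "x (Suc j) \<le> x j - (K * x m / 2) * \<sigma>" if "j < m" for j
    proof -
      have "K * x m \<le> K * x j" using monoj[of j m] that Kpos by simp
      then have "K * x m / 2 \<le> K * x j - 4" using big by simp
      then have "(K * x m / 2) * \<sigma> \<le> (K * x j - 4) * \<sigma>" using \<sigma>0 by (rule mult_right_mono)
      then show ?thesis using blk[of j] by simp
    qed
    have ind: "x j \<le> x 0 - real j * ((K * x m / 2) * \<sigma>)" if "j \<le> m" for j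
      using that
    proof (induction j)
      case (Suc j)
      then have "x j \<le> x 0 - real j * ((K * x m / 2) * \<sigma>)" by simp
      moreover have "x (Suc j) \<le> x j - (K * x m / 2) * \<sigma>" using step Suc.prems by simp
      moreover have "real (Suc j) * ((K * x m / 2) * \<sigma>) = real j * ((K * x m / 2) * \<sigma>) + (K * x m / 2) * \<sigma>"
        by (simp add: algebra_simps)
      ultimately show ?case by linarith
    qed simp
    have "real m * ((K * x m / 2) * \<sigma>) \<le> 2" using ind[of m] x0 xm0 by simp
    moreover have "real m * \<sigma> \<ge> 1/12"
    proof -
      have "K powr \<beta> * K powr (-\<beta>) = 1" using Kpos by (simp add: powr_add[symmetric])
      moreover have "K powr \<beta> * K powr (-\<beta>) \<le> real m * (12 * \<sigma>)"
        using mge hyp e\<sigma> unfolding E_def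
        by (intro mult_mono) auto
      ultimately show ?thesis by simp
    qed
    moreover have "(K * x m / 2) * (1/12) \<le> (K * x m / 2) * (real m * \<sigma>)"
      using big \<open>real m * \<sigma> \<ge> 1/12\<close> by (intro mult_left_mono) auto
    moreover have "real m * ((K * x m / 2) * \<sigma>) = (K * x m / 2) * (real m * \<sigma>)" by simp
    ultimately have "(1/12) * (K * x m / 2) \<le> 2" by linarith
    then show False using big by simp
  qed
  then show ?thesis unfolding x_def m_def using Kpos by (simp add: field_simps)
qed


theorem theorem7:
  fixes \<beta> :: real
  assumes "\<beta> > 2"
  shows "\<exists>C::real. \<forall>N::nat. \<forall>\<theta>::real. \<forall>K::real.
     N \<ge> 1 \<and> 0 \<le> \<theta> \<and> \<theta> < pi \<and> K \<ge> 1 \<and>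
     measure lebesgue {s::real. real (fstar N \<theta> s) \<ge> K} \<ge> K powr (- \<beta>)
     \<longrightarrow> measure lebesgue (proj \<theta> ` Gset (N * nat \<lceil>K powr \<beta>\<rceil>)) \<le> C / K"
proof (intro exI[of _ 48] allI impI)
  fix N :: nat and \<theta> K :: real
  assume h: "N \<ge> 1 \<and> 0 \<le> \<theta> \<and> \<theta> < pi \<and> K \<ge> 1 \<and>
     measure lebesgue {s::real. real (fstar N \<theta> s) \<ge> K} \<ge> K powr (- \<beta>)"
  have "proj \<theta> ` Gset (N * nat \<lceil>K powr \<beta>\<rceil>) = Pr \<theta> (N * nat \<lceil>K powr \<beta>\<rceil>)"
    unfolding P_eq Pr_def ..
  then show "measure lebesgue (proj \<theta> ` Gset (N * nat \<lceil>K powr \<beta>\<rceil>)) \<le> 48 / K"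
    using main_bound[where N=N and \<theta>=\<theta> and K=K and \<beta>=\<beta>] h by simp
qed

end
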